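(* Let $R$ be a simple path in $T$ with consecutive vertices $r_1,\dots,r_m$, let $k$ be an integer with $2\le k\le m$, put $N=m-k+1$, and for $j=1,\dots,N$ let $P_j$ be the path $r_j,r_{j+1},\dots,r_{j+k-1}$. Assume all $P_j$ have the same length, i.e. $|P_j|=l$ for all $j$. Then the sequence $j\mapsto\overline{S}(P_j)$ is unimodal of "increasing then decreasing" type: there exists $j^*\in\{1,\dots,N\}$ such that $\overline{S}(P_1)\le\overline{S}(P_2)\le\dots\le\overline{S}(P_{j^*})$ and $\overline{S}(P_{j^*})\ge\overline{S}(P_{j^*+1})\ge\dots\ge\overline{S}(P_N)$.
   Context: Let $T=(V,E)$ be a finite tree with vertex set $V=\{v_1,\dots,v_n\}$ and positive edge lengths; $d(x,y)$ denotes the length of the unique path in $T$ between vertices $x,y$. Each vertex $v_i$ has a weight $w_i\ge 0$ with $w(T)=\sum_i w_i=1$. A path $P$ is the vertex sequence $p(1),\dots,p(k)$ of a simple path in $T$; $|P|=d(p(1),p(k))$. For $v\in V$, $p_P(v)$ denotes the unique vertex of $P$ closest to $v$. For a vertex $p$ of $P$, the branch $T_p$ (with respect to $P$) is the set of vertices $v$ with $p_P(v)=p$, and $w_{T_p}=\sum_{v_i\in T_p}w_i$. For a vertex $p$ of $P$ put $\overline{d}_P(p)=\sum_{j=1}^k w_{T_{p(j)}}\,d(p(j),p)$. Fix a speed $v_t>0$ and a constant $\overline{G}\ge0$. Define $\overline{T}_2(P)=\frac{1}{v_t}\sum_i w_i\,\overline{d}_P(p_P(v_i))$ and $\overline{S}(P)=\overline{T}_2(P)+\overline{G}$.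 *)

theory Defs
  imports Complex_Main
begin

definition is_path :: "'a set \<Rightarrow> ('a \<times> 'a) set \<Rightarrow> 'a list \<Rightarrow> bool" where
  "is_path V E ps \<longleftrightarrow> ps \<noteq> [] \<and> distinct ps \<and> set ps \<subseteq> V \<and>
     (\<forall>i. Suc i < length ps \<longrightarrow> (ps ! i, ps ! Suc i) \<in> E)"

definition weighted_tree :: "'a set \<Rightarrow> ('a \<times> 'a) set \<Rightarrow> ('a \<Rightarrow> 'a \<Rightarrow> real) \<Rightarrow> bool" where
  "weighted_tree V E len \<longleftrightarrow> finite V \<and> V \<noteq> {} \<and> E \<subseteq> V \<times> V \<and> sym E \<and> irrefl E \<and>
     (\<forall>x y. (x, y) \<in> E \<longrightarrow> len x y > 0 \<and> len x y = len y x) \<and>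
     (\<forall>x\<in>V. \<forall>y\<in>V. \<exists>!ps. is_path V E ps \<and> hd ps = x \<and> last ps = y)"

definition path_len :: "('a \<Rightarrow> 'a \<Rightarrow> real) \<Rightarrow> 'a list \<Rightarrow> real" where
  "path_len len ps = (\<Sum>i<length ps - 1. len (ps ! i) (ps ! Suc i))"

definition tdist :: "'a set \<Rightarrow> ('a \<times> 'a) set \<Rightarrow> ('a \<Rightarrow> 'a \<Rightarrow> real) \<Rightarrow> 'a \<Rightarrow> 'a \<Rightarrow> real" where
  "tdist V E len x y = path_len len (THE ps. is_path V E ps \<and> hd ps = x \<and> last ps = y)"

definition proj :: "'a set \<Rightarrow> ('a \<times> 'a) set \<Rightarrow> ('a \<Rightarrow> 'a \<Rightarrow> real) \<Rightarrow> 'a list \<Rightarrow> 'a \<Rightarrow> 'a" where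
  "proj V E len P v = (THE p. p \<in> set P \<and>
      (\<forall>q\<in>set P. q \<noteq> p \<longrightarrow> tdist V E len v p < tdist V E len v q))"

definition branch_weight :: "'a set \<Rightarrow> ('a \<times> 'a) set \<Rightarrow> ('a \<Rightarrow> 'a \<Rightarrow> real) \<Rightarrow> ('a \<Rightarrow> real)
     \<Rightarrow> 'a list \<Rightarrow> 'a \<Rightarrow> real" where
  "branch_weight V E len w P p = (\<Sum>v\<in>{v\<in>V. proj V E len P v = p}. w v)"

definition dbar :: "'a set \<Rightarrow> ('a \<times> 'a) set \<Rightarrow> ('a \<Rightarrow> 'a \<Rightarrow> real) \<Rightarrow> ('a \<Rightarrow> real)
     \<Rightarrow> 'a list \<Rightarrow> 'a \<Rightarrow> real" where
  "dbar V E len w P p = (\<Sum>j<length P. branch_weight V E len w P (P ! j) * tdist V E len (P ! j) p)"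

definition T2bar :: "'a set \<Rightarrow> ('a \<times> 'a) set \<Rightarrow> ('a \<Rightarrow> 'a \<Rightarrow> real) \<Rightarrow> ('a \<Rightarrow> real)
     \<Rightarrow> real \<Rightarrow> 'a list \<Rightarrow> real" where
  "T2bar V E len w vt P = (1 / vt) * (\<Sum>v\<in>V. w v * dbar V E len w P (proj V E len P v))"

definition Sbar :: "'a set \<Rightarrow> ('a \<times> 'a) set \<Rightarrow> ('a \<Rightarrow> 'a \<Rightarrow> real) \<Rightarrow> ('a \<Rightarrow> real)
     \<Rightarrow> real \<Rightarrow> real \<Rightarrow> 'a list \<Rightarrow> real" where
  "Sbar V E len w vt G P = T2bar V E len w vt P + G"

definition subpath :: "'a list \<Rightarrow> nat \<Rightarrow> nat \<Rightarrow> 'a list" where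
  "subpath R k j = take k (drop (j - 1) R)"

end

theory Submission
  imports Defs
begin

lemma is_path_alt: "is_path V E ps \<longleftrightarrow> ps \<noteq> [] \<and> distinct ps \<and> set ps \<subseteq> V \<and>
   successively (\<lambda>a b. (a,b)\<in>E) ps"
  by (simp add: is_path_def successively_conv_nth)

fun pl :: "('a\<Rightarrow>'a\<Rightarrow>real) \<Rightarrow> 'a list \<Rightarrow> real" where
  "pl len (a#b#zs) = len a b + pl len (b#zs)" | "pl len _ = 0"

lemma path_len_pl: "path_len len ps = pl len ps"
proof (induction len ps rule: pl.induct)
  case (1 len a b zs)
  have "path_len len (a#b#zs) = (\<Sum>i<Suc (length zs). len ((a#b#zs)!i) ((a#b#zs)! Suc i))"
    by (simp add: path_len_def)
  also have "\<dots> = len a b + (\<Sum>i<length zs. len ((b#zs)!i) ((b#zs)! Suc i))"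
    by (subst sum.lessThan_Suc_shift) simp
  also have "\<dots> = len a b + path_len len (b#zs)" by (simp add: path_len_def)
  finally show ?case using 1 by simp
qed (auto simp: path_len_def)

lemma pl_append: "xs \<noteq> [] \<Longrightarrow> ys \<noteq> [] \<Longrightarrow> last xs = hd ys \<Longrightarrow>
   pl len (xs @ tl ys) = pl len xs + pl len ys"
proof (induction xs rule: induct_list012)
  case (2 a) then show ?case by (cases ys) auto
next
  case (3 a b zs) then show ?case by simp
qed simp

lemma pl_rev: "(\<forall>a b. (a,b)\<in>E \<longrightarrow> len a b = len b a) \<Longrightarrow> successively (\<lambda>a b. (a,b)\<in>E) ps \<Longrightarrow>
   pl len (rev ps) = pl len ps"
proof (induction len ps rule: pl.induct)
  case (1 len a b zs)
  have "pl len (rev (a#b#zs)) = pl len (rev (b#zs) @ tl [b,a])" by simp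
  also have "\<dots> = pl len (rev (b#zs)) + pl len [b,a]"
    by (rule pl_append) (auto simp: last_rev)
  also have "\<dots> = pl len (b#zs) + len b a" using 1(1) 1(2) 1(3) by auto
  also have "len b a = len a b" using 1(2) 1(3) by (metis successively.simps(3))
  finally show ?case by simp
qed auto

lemma successively_take: "successively P xs \<Longrightarrow> successively P (take n xs)"
  by (simp add: successively_conv_nth)
lemma successively_drop: "successively P xs \<Longrightarrow> successively P (drop n xs)"
  by (simp add: successively_conv_nth)

lemma is_path_seg: "is_path V E R \<Longrightarrow> a + n < length R \<Longrightarrow> is_path V E (take (Suc n) (drop a R))"
  unfolding is_path_alt
  by (auto intro!: successively_take successively_drop dest: in_set_takeD in_set_dropD)

lemma is_path_rev: "sym E \<Longrightarrow> is_path V E ps \<Longrightarrow> is_path V E (rev ps)"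
  unfolding is_path_alt
  by (auto elim: successively_mono dest: symD)

lemma pl_seg: "a + n < length R \<Longrightarrow>
   pl len (take (Suc n) (drop a R)) = (\<Sum>i<n. len (R!(a+i)) (R!(a+Suc i)))"
proof -
  assume a: "a + n < length R"
  then have l: "length (take (Suc n) (drop a R)) = Suc n" by simp
  show ?thesis using a unfolding path_len_pl[symmetric] path_len_def l
  by simp
qed

locale rsetup =
  fixes V :: "'a set" and E and len :: "'a \<Rightarrow> 'a \<Rightarrow> real" and R :: "'a list"
  assumes tree: "weighted_tree V E len" and Rp: "is_path V E R"
begin

definition e :: "nat \<Rightarrow> real" where
  "e i = (if Suc i < length R then len (R!i) (R!Suc i) else 1)"
definition x :: "nat \<Rightarrow> real" where "x n = (\<Sum>i<n. e i)"

lemma finV: "finite V" using tree by (simp add: weighted_tree_def)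
lemma symE: "sym E" using tree by (simp add: weighted_tree_def)
lemma len_sym: "\<forall>a b. (a,b)\<in>E \<longrightarrow> len a b = len b a" using tree unfolding weighted_tree_def by blast
lemma len_pos: "(a,b)\<in>E \<Longrightarrow> len a b > 0" using tree by (simp add: weighted_tree_def)
lemma uniq: "a \<in> V \<Longrightarrow> b \<in> V \<Longrightarrow> \<exists>!ps. is_path V E ps \<and> hd ps = a \<and> last ps = b"
  using tree by (simp add: weighted_tree_def)

lemma tdist_path: "is_path V E ps \<Longrightarrow> tdist V E len (hd ps) (last ps) = pl len ps"
proof -
  assume p: "is_path V E ps"
  then have "hd ps \<in> V" "last ps \<in> V" by (auto simp: is_path_def)
  then have "(THE q. is_path V E q \<and> hd q = hd ps \<and> last q = last ps) = ps"
    using p uniq by (intro the1_equality) auto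
  then show ?thesis by (simp add: tdist_def path_len_pl)
qed

lemma R_edge: "Suc i < length R \<Longrightarrow> (R!i, R!Suc i) \<in> E"
  using Rp by (simp add: is_path_def)

lemma e_pos: "e i > 0"
  using len_pos R_edge by (simp add: e_def)

lemma x_mono: "strict_mono x"
  unfolding strict_mono_Suc_iff x_def using e_pos by simp

lemma x_add: "x (a+n) = x a + (\<Sum>i<n. e (a+i))"
  by (induction n) (auto simp: x_def)

lemma seg_fwd: "a \<le> b \<Longrightarrow> b < length R \<Longrightarrow> \<exists>seg. is_path V E seg \<and> hd seg = R!a \<and> last seg = R!b
   \<and> pl len seg = x b - x a \<and> set seg \<subseteq> set R"
proof -
  assume ab: "a \<le> b" "b < length R"
  define n where "n = b - a"
  have b: "b = a + n" using ab n_def by simp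
  let ?s = "take (Suc n) (drop a R)"
  have ls: "length ?s = Suc n" using ab b by simp
  have "is_path V E ?s" using is_path_seg[OF Rp] ab b by simp
  moreover have "hd ?s = R!a" using ab by (simp add: hd_drop_conv_nth)
  moreover have "last ?s = R!b" using ab b ls by (simp add: last_conv_nth del: length_take)
  moreover have "pl len ?s = x b - x a"
    using pl_seg[of a n R len] ab b x_add[of a n] by (simp add: e_def)
  moreover have "set ?s \<subseteq> set R" by (meson in_set_dropD in_set_takeD subsetI)
  ultimately show ?thesis by blast
qed

lemma seg: "a < length R \<Longrightarrow> b < length R \<Longrightarrow> \<exists>seg. is_path V E seg \<and> hd seg = R!a \<and> last seg = R!b
   \<and> pl len seg = \<bar>x b - x a\<bar> \<and> set seg \<subseteq> set R"
proof (cases "a \<le> b")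
  case True
  assume "a < length R" "b < length R"
  then obtain s where "is_path V E s \<and> hd s = R!a \<and> last s = R!b
   \<and> pl len s = x b - x a \<and> set s \<subseteq> set R" using seg_fwd True by blast
  moreover have "x a \<le> x b" using True x_mono by (simp add: strict_mono_less_eq)
  ultimately show ?thesis by auto
next
  case False
  assume "a < length R" "b < length R"
  then obtain s where s: "is_path V E s \<and> hd s = R!b \<and> last s = R!a
   \<and> pl len s = x a - x b \<and> set s \<subseteq> set R" using seg_fwd False by (meson nat_le_linear)
  have "x b \<le> x a" using False x_mono by (simp add: strict_mono_less_eq)
  moreover have "is_path V E (rev s)" using is_path_rev[OF symE] s by blast
  moreover have "pl len (rev s) = pl len s" using pl_rev[OF len_sym] s by (simp add: is_path_alt)
  moreover have "s \<noteq> []" using s by (simp add: is_path_def)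
  ultimately show ?thesis using s by (intro exI[of _ "rev s"]) (auto simp: hd_rev last_rev)
qed

lemma L1: "a < length R \<Longrightarrow> b < length R \<Longrightarrow> tdist V E len (R!a) (R!b) = \<bar>x b - x a\<bar>"
  using seg tdist_path by metis

lemma RV: "i < length R \<Longrightarrow> R!i \<in> V" using Rp by (auto simp: is_path_def)

lemma L2: "v \<in> V \<Longrightarrow> \<exists>p<length R. \<forall>i<length R.
    tdist V E len v (R!i) = tdist V E len v (R!p) + \<bar>x i - x p\<bar>"
proof -
  assume v: "v\<in>V"
  define Q where "Q i = (THE ps. is_path V E ps \<and> hd ps = v \<and> last ps = R!i)" for i
  have Q: "is_path V E (Q i) \<and> hd (Q i) = v \<and> last (Q i) = R!i" if "i<length R" for i
    unfolding Q_def using uniq[OF v RV[OF that]] by (rule theI')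
  have Qu: "Q i = ps" if "i<length R" "is_path V E ps" "hd ps = v" "last ps = R!i" for i ps
    unfolding Q_def using uniq[OF v RV[OF that(1)]] that by (intro the1_equality) auto
  have m0: "0 < length R" using Rp by (simp add: is_path_def)
  obtain p where p: "p < length R" "\<forall>i. i<length R \<longrightarrow> length (Q p) \<le> length (Q i)"
    using ex_has_least_nat[of "\<lambda>i. i < length R" 0 "\<lambda>i. length (Q i)"] m0 by blast
  define q where "q = Q p"
  have qp: "is_path V E q" "hd q = v" "last q = R!p" using Q[OF p(1)] q_def by auto
  have qne: "q \<noteq> []" using qp by (simp add: is_path_def)
  have notR: "q!t \<notin> set R" if t: "Suc t < length q" for t
  proof
    assume "q!t \<in> set R"
    then obtain i where i: "i<length R" "R!i = q!t" by (auto simp: in_set_conv_nth)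
    have "is_path V E (take (Suc t) q)" using is_path_seg[OF qp(1), of 0 t] t by simp
    moreover have "hd (take (Suc t) q) = v" using qp qne by simp
    moreover have "last (take (Suc t) q) = R!i"
    proof -
      have "length (take (Suc t) q) = Suc t" using t by simp
      then show ?thesis using t i by (subst last_conv_nth) auto
    qed
    ultimately have "Q i = take (Suc t) q" using Qu[OF i(1)] by simp
    then have "length (Q i) < length q" using t by simp
    then show False using p(2) i(1) q_def by fastforce
  qed
  show ?thesis
  proof (intro exI[of _ p] conjI allI impI)
    show "p < length R" by (rule p(1))
    fix i assume i: "i<length R"
    obtain s where s: "is_path V E s" "hd s = R!p" "last s = R!i" "pl len s = \<bar>x i - x p\<bar>"
      "set s \<subseteq> set R"
      using seg[OF p(1) i] by blast
    have sne: "s \<noteq> []" using s by (simp add: is_path_def)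
    have seq: "s = hd s # tl s" using sne by simp
    have ds: "distinct s" using s by (simp add: is_path_def)
    have hdnot: "hd s \<notin> set (tl s)" using ds seq by (metis distinct.simps(2))
    have disj: "set q \<inter> set (tl s) = {}"
    proof (rule ccontr)
      assume "set q \<inter> set (tl s) \<noteq> {}"
      then obtain y where y: "y \<in> set q" "y \<in> set (tl s)" by blast
      then obtain t where t: "t < length q" "q!t = y" by (auto simp: in_set_conv_nth)
      show False
      proof (cases "Suc t < length q")
        case True
        then have "y \<notin> set R" using notR[OF True] t by simp
        moreover have "y \<in> set R" using y(2) s(5) by (cases s) auto
        ultimately show False by simp
      next
        case False
        then have "t = length q - 1" using t by simp
        then have "y = last q" using t qne by (simp add: last_conv_nth)
        then show False using qp(3) s(2) hdnot y(2) by simp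
      qed
    qed
    have path: "is_path V E (q @ tl s)"
    proof -
      obtain a0 rest where s0: "s = a0 # rest" using sne by (cases s) auto
      have "successively (\<lambda>a b. (a,b)\<in>E) s" using s(1) by (simp add: is_path_alt)
      then have s1: "successively (\<lambda>a b. (a,b)\<in>E) (tl s)"
        and s2: "tl s \<noteq> [] \<Longrightarrow> (hd s, hd (tl s)) \<in> E"
        unfolding s0 by (auto simp: successively_Cons)
      have "set (tl s) \<subseteq> set s" by (cases s) auto
      moreover have "successively (\<lambda>a b. (a,b)\<in>E) q" "distinct q" "set q \<subseteq> V"
        using qp(1) by (auto simp: is_path_alt)
      moreover have "set s \<subseteq> V" using s(1) by (simp add: is_path_def)
      ultimately show ?thesis using s1 s2 disj qp(3) s(2) qne ds
        unfolding is_path_alt successively_append_iff by (auto simp: distinct_tl)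
    qed
    have hd: "hd (q @ tl s) = v" using qp qne by simp
    have lst: "last (q @ tl s) = R!i"
    proof (cases "tl s = []")
      case True
      then have "s = [hd s]" using seq by simp
      then have "last s = hd s" by (metis last.simps)
      then show ?thesis using True qp(3) s(2) s(3) by simp
    next
      case False
      then show ?thesis using s(3) seq by (metis last_ConsR last_appendR)
    qed
    have "tdist V E len v (R!i) = pl len (q @ tl s)" using tdist_path[OF path] hd lst by simp
    also have "\<dots> = pl len q + pl len s" using pl_append qne sne qp(3) s(2) by metis
    also have "pl len q = tdist V E len v (R!p)" using tdist_path[OF qp(1)] qp by simp
    finally show "tdist V E len v (R!i) = tdist V E len v (R!p) + \<bar>x i - x p\<bar>" using s(4) by simp
  qed
qed

definition pi :: "'a \<Rightarrow> nat" where
  "pi v = (SOME p. p < length R \<and> (\<forall>i<length R.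
    tdist V E len v (R!i) = tdist V E len v (R!p) + \<bar>x i - x p\<bar>))"

lemma pi: "v \<in> V \<Longrightarrow> pi v < length R \<and> (\<forall>i<length R.
    tdist V E len v (R!i) = tdist V E len v (R!pi v) + \<bar>x i - x (pi v)\<bar>)"
  unfolding pi_def by (rule someI_ex) (use L2 in blast)

lemma clamp_lt: assumes "s \<le> i" "i \<le> t" "i \<noteq> max s (min t p)"
  shows "\<bar>x (max s (min t p)) - x p\<bar> < \<bar>x i - x p\<bar>"
proof -
  have sm: "a < b \<Longrightarrow> x a < x b" for a b using x_mono strict_monoD by blast
  show ?thesis
  proof (cases "p < s")
    case True
    then have "max s (min t p) = s" "s < i" using assms by auto
    then show ?thesis using sm[of p s] sm[of s i] True by simp
  next
    case False
    show ?thesis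
    proof (cases "t < p")
      case True
      then have "max s (min t p) = t" "i < t" using assms by auto
      then show ?thesis using sm[of t p] sm[of i t] True by simp
    next
      case False2: False
      then have "max s (min t p) = p" using False by auto
      moreover have "x i \<noteq> x p" using assms calculation sm by (metis less_irrefl linorder_neqE_nat)
      ultimately show ?thesis by simp
    qed
  qed
qed

lemma set_window: "q \<in> set (take k (drop s R)) \<Longrightarrow> \<exists>i. s \<le> i \<and> i < s + k \<and> i < length R \<and> q = R!i"
proof -
  assume "q \<in> set (take k (drop s R))"
  then obtain t where t: "t < length (take k (drop s R))" "q = take k (drop s R) ! t"
    by (auto simp: in_set_conv_nth)
  then have "t < k" "s + t < length R" by auto
  moreover have "q = R!(s+t)" using t calculation by simp
  ultimately show ?thesis by (intro exI[of _ "s+t"]) auto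
qed

lemma proj_window: assumes v: "v \<in> V" and sk: "s + k \<le> length R" and k: "1 \<le> k"
  shows "proj V E len (take k (drop s R)) v = R ! (max s (min (s+k-1) (pi v)))"
proof -
  let ?c = "max s (min (s+k-1) (pi v))"
  let ?P = "take k (drop s R)"
  have c: "s \<le> ?c" "?c < s + k" "?c < length R" using sk k by auto
  have inP: "R!?c \<in> set ?P" using c
    by (auto simp: in_set_conv_nth intro!: exI[of _ "?c - s"])
  have dR: "distinct R" using Rp by (simp add: is_path_def)
  have pv: "pi v < length R" and dv: "\<forall>i<length R.
    tdist V E len v (R!i) = tdist V E len v (R!pi v) + \<bar>x i - x (pi v)\<bar>" using pi[OF v] by blast+
  have key: "\<forall>q\<in>set ?P. q \<noteq> R!?c \<longrightarrow> tdist V E len v (R!?c) < tdist V E len v q"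
  proof (intro ballI impI)
    fix q assume q: "q \<in> set ?P" "q \<noteq> R!?c"
    then obtain i where i: "s \<le> i" "i < s+k" "i < length R" "q = R!i" using set_window by blast
    have "i \<noteq> ?c" using q i by auto
    then have "\<bar>x ?c - x (pi v)\<bar> < \<bar>x i - x (pi v)\<bar>" using clamp_lt[of s i "s+k-1" "pi v"] i by simp
    moreover have "tdist V E len v (R!i) = tdist V E len v (R!pi v) + \<bar>x i - x (pi v)\<bar>"
      using dv i(3) by blast
    moreover have "tdist V E len v (R!?c) = tdist V E len v (R!pi v) + \<bar>x ?c - x (pi v)\<bar>"
      using dv c(3) by blast
    ultimately show "tdist V E len v (R!?c) < tdist V E len v q" unfolding i(4) by linarith
  qed
  show ?thesis unfolding proj_def
  proof (rule the1_equality)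
    show "\<exists>!p. p \<in> set ?P \<and> (\<forall>q\<in>set ?P. q \<noteq> p \<longrightarrow> tdist V E len v p < tdist V E len v q)"
    proof (rule ex1I[of _ "R!?c"])
      show "R!?c \<in> set ?P \<and> (\<forall>q\<in>set ?P. q \<noteq> R!?c \<longrightarrow> tdist V E len v (R!?c) < tdist V E len v q)"
        using inP key by blast
      fix p assume "p \<in> set ?P \<and> (\<forall>q\<in>set ?P. q \<noteq> p \<longrightarrow> tdist V E len v p < tdist V E len v q)"
      then show "p = R!?c" using inP key by force
    qed
  qed (use inP key in blast)
qed

lemma regroup: fixes w :: "'b \<Rightarrow> real" and f :: "'c \<Rightarrow> real"
  assumes "finite A" "distinct P" "\<forall>u\<in>A. g u \<in> set P"
  shows "(\<Sum>t<length P. (\<Sum>u\<in>{u\<in>A. g u = P!t}. w u) * f (P!t)) = (\<Sum>u\<in>A. w u * f (g u))"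
proof -
  let ?F = "\<lambda>p. (\<Sum>u\<in>{u\<in>A. g u = p}. w u) * (f p :: real)"
  have img: "(!) P ` {..<length P} = set P" by (auto simp: in_set_conv_nth)
  have "(\<Sum>t<length P. ?F (P!t)) = sum ?F ((!) P ` {..<length P})"
    using sum.reindex[OF inj_on_nth[OF assms(2)], of "{..<length P}" ?F] by simp
  also have "\<dots> = sum ?F (set P)" using img by simp
  also have "\<dots> = (\<Sum>p\<in>set P. \<Sum>u\<in>{u\<in>A. g u = p}. w u * f (g u))"
    by (rule sum.cong) (auto simp: sum_distrib_right)
  also have "\<dots> = (\<Sum>u\<in>A. w u * f (g u))"
    using sum.group[of A "set P" g "\<lambda>u. w u * f (g u)"] assms by auto
  finally show ?thesis .
qed

lemma T2_window: assumes sk: "s + k \<le> length R" and k: "1 \<le> k"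
  shows "T2bar V E len w vt (take k (drop s R)) = (1/vt) * (\<Sum>v\<in>V. w v * (\<Sum>u\<in>V. w u *
     \<bar>x (max s (min (s+k-1) (pi v))) - x (max s (min (s+k-1) (pi u)))\<bar>))"
proof -
  let ?P = "take k (drop s R)"
  let ?c = "\<lambda>a. max s (min (s+k-1) a)"
  have dP: "distinct ?P" using Rp by (simp add: is_path_def)
  have inP: "proj V E len ?P u \<in> set ?P" if "u \<in> V" for u
  proof -
    have c: "?c (pi u) < length R" "s \<le> ?c (pi u)" "?c (pi u) < s + k" using sk k by auto
    have "R!?c (pi u) \<in> set ?P" using c
      by (auto simp: in_set_conv_nth intro!: exI[of _ "?c (pi u) - s"])
    then show ?thesis using proj_window[OF that sk k] by simp
  qed
  have "dbar V E len w ?P (proj V E len ?P v) =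
     (\<Sum>u\<in>V. w u * \<bar>x (?c (pi v)) - x (?c (pi u))\<bar>)" if v: "v\<in>V" for v
  proof -
    have "dbar V E len w ?P (proj V E len ?P v) = (\<Sum>u\<in>V. w u * tdist V E len (proj V E len ?P u) (proj V E len ?P v))"
      unfolding dbar_def branch_weight_def
      using regroup[OF finV dP, of "proj V E len ?P" w "\<lambda>p. tdist V E len p (proj V E len ?P v)"] inP
      by (simp add: min_def sk)
    also have "\<dots> = (\<Sum>u\<in>V. w u * \<bar>x (?c (pi v)) - x (?c (pi u))\<bar>)"
    proof (rule sum.cong)
      fix u assume u: "u \<in> V"
      have "?c (pi u) < length R" "?c (pi v) < length R" using sk k by auto
      then show "w u * tdist V E len (proj V E len ?P u) (proj V E len ?P v) = w u * \<bar>x (?c (pi v)) - x (?c (pi u))\<bar>"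
        using proj_window[OF u sk k] proj_window[OF v sk k] L1 by simp
    qed simp
    finally show ?thesis .
  qed
  then show ?thesis unfolding T2bar_def by (simp cong: sum.cong)
qed

definition ind :: "nat \<Rightarrow> nat \<Rightarrow> real" where "ind i a = (if i < a then 1 else 0)"

lemma x_clamp: assumes "s \<le> t" shows "x (max s (min t a)) = x s + (\<Sum>i\<in>{s..<t}. e i * ind i a)"
proof -
  let ?c = "max s (min t a)"
  have sc: "s \<le> ?c" using assms by simp
  have "x ?c = sum e {0..<s} + sum e {s..<?c}"
    unfolding x_def lessThan_atLeast0 using sum.atLeastLessThan_concat[OF le0 sc, of e] by simp
  moreover have "(\<Sum>i\<in>{s..<t}. e i * ind i a) = sum e {i\<in>{s..<t}. i < a}"
    unfolding sum.inter_filter[OF finite_atLeastLessThan] ind_def by (intro sum.cong) auto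
  moreover have "{i\<in>{s..<t}. i < a} = {s..<?c}" using assms by auto
  ultimately show ?thesis unfolding x_def lessThan_atLeast0 by simp
qed

lemma abs_sum_nonpos: "(\<forall>i\<in>S. f i \<le> (0::real)) \<Longrightarrow> \<bar>sum f S\<bar> = sum (\<lambda>i. \<bar>f i\<bar>) S"
proof -
  assume a: "\<forall>i\<in>S. f i \<le> 0"
  then have "sum f S \<le> 0" by (simp add: sum_nonpos)
  then have "\<bar>sum f S\<bar> = sum (\<lambda>i. - f i) S" by (simp add: sum_negf)
  also have "\<dots> = sum (\<lambda>i. \<bar>f i\<bar>) S" using a by (intro sum.cong) auto
  finally show ?thesis .
qed

lemma abs_clamp: assumes "s \<le> t"
  shows "\<bar>x (max s (min t a)) - x (max s (min t b))\<bar> = (\<Sum>i\<in>{s..<t}. e i * \<bar>ind i a - ind i b\<bar>)"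
proof -
  have d: "x (max s (min t a)) - x (max s (min t b)) = (\<Sum>i\<in>{s..<t}. e i * (ind i a - ind i b))"
    using x_clamp[OF assms, of a] x_clamp[OF assms, of b] by (simp add: right_diff_distrib sum_subtractf)
  have ep: "\<And>i. e i > 0" by (rule e_pos)
  show ?thesis
  proof (cases "a \<le> b")
    case True
    then have "\<forall>i\<in>{s..<t}. e i * (ind i a - ind i b) \<le> 0"
      using ep by (auto simp: ind_def mult_nonpos_nonneg less_imp_le)
    then show ?thesis unfolding d by (simp add: abs_sum_nonpos abs_mult abs_of_pos[OF ep])
  next
    case False
    then have "\<forall>i\<in>{s..<t}. e i * (ind i b - ind i a) \<le> 0"
      using ep by (auto simp: ind_def mult_nonpos_nonneg less_imp_le)
    moreover have "\<bar>\<Sum>i\<in>{s..<t}. e i * (ind i a - ind i b)\<bar> = \<bar>\<Sum>i\<in>{s..<t}. e i * (ind i b - ind i a)\<bar>"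
    proof -
      have "(\<Sum>i\<in>{s..<t}. e i * (ind i a - ind i b)) = - (\<Sum>i\<in>{s..<t}. e i * (ind i b - ind i a))"
        by (simp only: sum_negf[symmetric]) (simp add: algebra_simps)
      then show ?thesis by simp
    qed
    ultimately show ?thesis unfolding d by (simp add: abs_sum_nonpos abs_mult abs_of_pos[OF ep] abs_minus_commute)
  qed
qed

lemma pair_id: fixes w J :: "'b \<Rightarrow> real"
  assumes "sum w A = 1"
  shows "(\<Sum>v\<in>A. \<Sum>u\<in>A. w v * w u * (J v + J u - 2*J v*J u)) =
    2*(\<Sum>v\<in>A. w v*J v) - 2*(\<Sum>v\<in>A. w v*J v)^2"
proof -
  let ?B = "\<Sum>v\<in>A. w v*J v"
  have "(\<Sum>u\<in>A. w v * w u * (J v + J u - 2*J v*J u)) = w v*J v*(\<Sum>u\<in>A. w u) + w v*?B - 2*w v*J v*?B" for v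
    by (simp add: algebra_simps sum.distrib sum_subtractf sum_distrib_left)
  then have "(\<Sum>v\<in>A. \<Sum>u\<in>A. w v * w u * (J v + J u - 2*J v*J u)) =
      (\<Sum>v\<in>A. w v*J v + w v*?B - 2*w v*J v*?B)" using assms by simp
  also have "\<dots> = ?B + (\<Sum>v\<in>A. w v*?B) - (\<Sum>v\<in>A. 2*w v*J v*?B)"
    by (simp only: sum.distrib sum_subtractf)
  also have "(\<Sum>v\<in>A. w v*?B) = sum w A * ?B" by (rule sum_distrib_right[symmetric])
  also have "(\<Sum>v\<in>A. 2*w v*J v*?B) = (\<Sum>v\<in>A. 2*w v*J v)*?B" by (rule sum_distrib_right[symmetric])
  also have "(\<Sum>v\<in>A. 2*w v*J v) = 2*?B" by (simp add: sum_distrib_left mult.assoc)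
  also have "?B + sum w A * ?B - 2 * ?B * ?B = ?B + ?B - 2*?B*?B" using assms by simp
  finally show ?thesis by (simp add: power2_eq_square)
qed

definition B :: "('a \<Rightarrow> real) \<Rightarrow> nat \<Rightarrow> real" where "B w i = (\<Sum>u\<in>V. w u * ind i (pi u))"

lemma ind_abs: "\<bar>ind i a - ind i b\<bar> = ind i a + ind i b - 2 * ind i a * ind i b"
  by (simp add: ind_def)

lemma S_window: assumes sk: "s + k \<le> length R" and k: "1 \<le> k" and ws: "sum w V = 1"
  shows "T2bar V E len w vt (take k (drop s R)) = (1/vt) * (\<Sum>i\<in>{s..<s+k-1}. e i * (2*B w i - 2*(B w i)^2))"
proof -
  let ?W = "{s..<s+k-1}"
  let ?D = "\<lambda>i v u. \<bar>ind i (pi v) - ind i (pi u)\<bar>"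
  have "T2bar V E len w vt (take k (drop s R)) = (1/vt) * (\<Sum>v\<in>V. w v * (\<Sum>u\<in>V. w u *
     (\<Sum>i\<in>?W. e i * ?D i v u)))"
    unfolding T2_window[OF sk k] using abs_clamp[of s "s+k-1"] k by simp
  also have "(\<Sum>v\<in>V. w v * (\<Sum>u\<in>V. w u * (\<Sum>i\<in>?W. e i * ?D i v u))) =
      (\<Sum>v\<in>V. \<Sum>u\<in>V. \<Sum>i\<in>?W. w v * w u * e i * ?D i v u)"
    by (simp add: sum_distrib_left mult.assoc)
  also have "\<dots> = (\<Sum>v\<in>V. \<Sum>i\<in>?W. \<Sum>u\<in>V. w v * w u * e i * ?D i v u)"
    by (rule sum.cong[OF refl], rule sum.swap)
  also have "\<dots> = (\<Sum>i\<in>?W. \<Sum>v\<in>V. \<Sum>u\<in>V. w v * w u * e i * ?D i v u)"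
    by (rule sum.swap)
  also have "\<dots> = (\<Sum>i\<in>?W. e i * (\<Sum>v\<in>V. \<Sum>u\<in>V. w v * w u *
      (ind i (pi v) + ind i (pi u) - 2 * ind i (pi v) * ind i (pi u))))"
    unfolding ind_abs sum_distrib_left by (intro sum.cong refl) (simp only: ac_simps)
  also have "\<dots> = (\<Sum>i\<in>?W. e i * (2*B w i - 2*(B w i)^2))"
    using pair_id[OF ws] by (simp add: B_def)
  finally show ?thesis .
qed

lemma B_anti: assumes wn: "\<forall>v\<in>V. w v \<ge> 0" and ij: "i \<le> j" shows "B w j \<le> B w i"
  unfolding B_def using wn ij by (intro sum_mono) (auto simp: ind_def)

lemma B_bounds: assumes wn: "\<forall>v\<in>V. w v \<ge> 0" and ws: "sum w V = 1" shows "0 \<le> B w i" "B w i \<le> 1"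
proof -
  show "0 \<le> B w i" unfolding B_def using wn by (intro sum_nonneg) (auto simp: ind_def)
  have "B w i \<le> sum w V" unfolding B_def using wn by (intro sum_mono) (auto simp: ind_def)
  then show "B w i \<le> 1" using ws by simp
qed

lemma phi_qc: fixes p q t :: real assumes "q \<le> t" "t \<le> p"
  shows "min (p - p^2) (q - q^2) \<le> t - t^2"
proof (cases "t + q \<le> 1")
  case True
  have "0 \<le> (t - q) * (1 - t - q)" using True assms by (intro mult_nonneg_nonneg) auto
  then have "q - q^2 \<le> t - t^2" by (simp add: algebra_simps power2_eq_square)
  then show ?thesis by simp
next
  case False
  have "0 \<le> (t - p) * (1 - t - p)" using False assms by (intro mult_nonpos_nonpos) auto
  then have "p - p^2 \<le> t - t^2" by (simp add: algebra_simps power2_eq_square)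
  then show ?thesis by simp
qed

lemma window_hd_last: assumes "s + k \<le> length R" "1 \<le> k"
  shows "hd (take k (drop s R)) = R!s" "last (take k (drop s R)) = R!(s+k-1)"
proof -
  have l: "length (take k (drop s R)) = k" using assms by simp
  show "hd (take k (drop s R)) = R!s" using assms by (simp add: hd_drop_conv_nth)
  show "last (take k (drop s R)) = R!(s+k-1)" using assms l by (subst last_conv_nth) auto
qed

lemma main:
  fixes w :: "'a \<Rightarrow> real" and vt G l :: real and k :: nat
  assumes w_nonneg: "\<forall>v\<in>V. w v \<ge> 0"
    and w_sum: "(\<Sum>v\<in>V. w v) = 1"
    and vt_pos: "vt > 0"
    and k_ge: "2 \<le> k" and k_le: "k \<le> length R"
    and same_len: "\<forall>j\<in>{1..length R - k + 1}.
        tdist V E len (hd (subpath R k j)) (last (subpath R k j)) = l"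
  shows "\<exists>js\<in>{1..length R - k + 1}.
           (\<forall>j. 1 \<le> j \<and> j < js \<longrightarrow>
              Sbar V E len w vt G (subpath R k j) \<le> Sbar V E len w vt G (subpath R k (j + 1))) \<and>
           (\<forall>j. js \<le> j \<and> j < length R - k + 1 \<longrightarrow>
              Sbar V E len w vt G (subpath R k j) \<ge> Sbar V E len w vt G (subpath R k (j + 1)))"
proof -
  define N where "N = length R - k + 1"
  define g where "g i = 2*B w i - 2*(B w i)^2" for i
  define Sb where "Sb j = Sbar V E len w vt G (subpath R k j)" for j
  have Sb_eq: "Sb j = G + (1/vt) * (\<Sum>i\<in>{j-1..<j-1+k-1}. e i * g i)" if "1 \<le> j" "j \<le> N" for j
  proof -
    have "j - 1 + k \<le> length R" using that N_def k_le by simp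
    then show ?thesis unfolding Sb_def Sbar_def subpath_def g_def
      using S_window[of "j-1" k w vt] w_sum k_ge by simp
  qed
  have xdiff: "x (s+k-1) - x s = l" if "s + k \<le> length R" for s
  proof -
    have "tdist V E len (hd (subpath R k (s+1))) (last (subpath R k (s+1))) = l"
      using same_len that by (auto simp: N_def)
    then have "tdist V E len (R!s) (R!(s+k-1)) = l"
      using window_hd_last[OF that] k_ge by (simp add: subpath_def)
    moreover have "x s \<le> x (s+k-1)" using x_mono k_ge by (simp add: strict_mono_less_eq)
    ultimately show ?thesis using L1[of s "s+k-1"] that k_ge by simp
  qed
  have e_eq: "e (s+k-1) = e s" if "s + 1 + k \<le> length R" for s
  proof -
    have h1: "x (s+1+k-1) - x (s+1) = x (s+k-1) - x s" using xdiff[of s] xdiff[of "s+1"] that by simp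
    have h2: "s+1+k-1 = Suc (s+k-1)" using k_ge by simp
    have h3: "x (Suc (s+k-1)) = x (s+k-1) + e (s+k-1)" unfolding x_def by simp
    have h4: "x (s+1) = x s + e s" by (simp add: x_def)
    show ?thesis using h1 h3 h4 unfolding h2 by linarith
  qed
  have diff: "Sb (j+1) - Sb j = (1/vt) * e (j-1) * (g (j-1+k-1) - g (j-1))" if "1 \<le> j" "j < N" for j
  proof -
    define s where "s = j - 1"
    have j: "j = s + 1" using that s_def by simp
    have sk: "s + 1 + k \<le> length R" using that N_def j k_le by simp
    have a: "(\<Sum>i\<in>{s..<s+k}. e i * g i) = e s * g s + (\<Sum>i\<in>{s+1..<s+k}. e i * g i)"
      using k_ge by (subst sum.atLeast_Suc_lessThan) auto
    have b: "(\<Sum>i\<in>{s..<s+k}. e i * g i) = (\<Sum>i\<in>{s..<s+k-1}. e i * g i) + e (s+k-1) * g (s+k-1)"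
    proof -
      have "s + k = Suc (s+k-1)" using k_ge by simp
      moreover have "s \<le> s+k-1" using k_ge by simp
      ultimately show ?thesis using sum.atLeastLessThan_Suc[of s "s+k-1" "\<lambda>i. e i * g i"] by simp
    qed
    have "Sb (j+1) - Sb j = (1/vt) * ((\<Sum>i\<in>{s+1..<s+k}. e i * g i) - (\<Sum>i\<in>{s..<s+k-1}. e i * g i))"
      using Sb_eq[of "j+1"] Sb_eq[of j] that j k_ge by (simp add: right_diff_distrib)
    also have "\<dots> = (1/vt) * (e (s+k-1) * g (s+k-1) - e s * g s)" using a b by simp
    also have "\<dots> = (1/vt) * e s * (g (s+k-1) - g s)" using e_eq[OF sk] by (simp add: algebra_simps)
    finally show ?thesis using j by simp
  qed
  define h where "h j = g (j-1+k-1) - g (j-1)" for j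
  have sign: "Sb j \<le> Sb (j+1) \<longleftrightarrow> h j \<ge> 0" if "1 \<le> j" "j < N" for j
  proof -
    have pos: "(1/vt) * e (j-1) > 0" using vt_pos e_pos by simp
    have d: "Sb (j+1) - Sb j = (1/vt) * e (j-1) * h j" using diff[OF that] unfolding h_def by simp
    have "Sb j \<le> Sb (j+1) \<longleftrightarrow> 0 \<le> Sb (j+1) - Sb j" by linarith
    also have "\<dots> \<longleftrightarrow> 0 \<le> (1/vt) * e (j-1) * h j" unfolding d ..
    also have "\<dots> \<longleftrightarrow> h j \<ge> 0"
    proof -
      have gen: "0 < c \<Longrightarrow> (0 \<le> c*y) = (0 \<le> y)" for c y :: real by (simp add: zero_le_mult_iff)
      show ?thesis by (rule gen[OF pos])
    qed
    finally show ?thesis .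
  qed
  have qc: "min (g a) (g c) \<le> g b" if "a \<le> b" "b \<le> c" for a b c
  proof -
    have "B w c \<le> B w b" "B w b \<le> B w a" using B_anti[OF w_nonneg] that by auto
    then have "min (B w a - (B w a)^2) (B w c - (B w c)^2) \<le> B w b - (B w b)^2" by (rule phi_qc)
    then show ?thesis unfolding g_def by (simp add: min_def split: if_splits)
  qed
  have mono_sign: "h j' \<le> 0" if "h j < 0" "1 \<le> j" "j \<le> j'" for j j'
  proof -
    let ?s = "j - 1" and ?s' = "j' - 1"
    have "g (?s+k-1) < g ?s" using that h_def by simp
    moreover have "min (g ?s) (g (?s'+k-1)) \<le> g (?s+k-1)" using qc that k_ge by simp
    ultimately have 1: "g (?s'+k-1) \<le> g (?s+k-1)" by (simp add: min_def split: if_splits)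
    have "min (g ?s) (g (?s'+k-1)) \<le> g ?s'" using qc that k_ge by simp
    then have "g (?s'+k-1) \<le> g ?s'" using 1 \<open>g (?s+k-1) < g ?s\<close> by (simp add: min_def split: if_splits)
    then show ?thesis using h_def by simp
  qed
  show ?thesis
  proof (cases "\<exists>j. 1 \<le> j \<and> j < N \<and> h j < 0")
    case True
    define js where "js = (LEAST j. 1 \<le> j \<and> j < N \<and> h j < 0)"
    have js: "1 \<le> js" "js < N" "h js < 0" using LeastI_ex[OF True] js_def by auto
    have before: "\<not> h j < 0" if "1 \<le> j" "j < js" for j
      using not_less_Least[of j "\<lambda>j. 1 \<le> j \<and> j < N \<and> h j < 0"] that js js_def by auto
    show ?thesis
    proof (intro bexI[of _ js] conjI allI impI)
      fix j assume j: "1 \<le> j \<and> j < js"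
      then show "Sbar V E len w vt G (subpath R k j) \<le> Sbar V E len w vt G (subpath R k (j + 1))"
        using sign[of j] before[of j] js unfolding Sb_def by auto
    next
      fix j assume j: "js \<le> j \<and> j < length R - k + 1"
      then have "h j \<le> 0" using mono_sign[OF js(3) js(1)] by auto
      then show "Sbar V E len w vt G (subpath R k j) \<ge> Sbar V E len w vt G (subpath R k (j + 1))"
        using diff[of j] j js N_def vt_pos e_pos[of "j-1"] h_def unfolding Sb_def
        by (smt (verit) divide_pos_pos mult_nonneg_nonpos mult_pos_pos le_trans)
    next
      show "js \<in> {1..length R - k + 1}" using js N_def by auto
    qed
  next
    case False
    show ?thesis
    proof (intro bexI[of _ N] conjI allI impI)
      fix j assume j: "1 \<le> j \<and> j < N"
      then show "Sbar V E len w vt G (subpath R k j) \<le> Sbar V E len w vt G (subpath R k (j + 1))"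
        using sign[of j] False unfolding Sb_def by auto
    next
      fix j assume j: "N \<le> j \<and> j < length R - k + 1"
      then show "Sbar V E len w vt G (subpath R k j) \<ge> Sbar V E len w vt G (subpath R k (j + 1))"
        using N_def by simp
    next
      show "N \<in> {1..length R - k + 1}" using N_def by auto
    qed
  qed
qed

end
theorem lemma4:
  fixes V :: "'a set" and E :: "('a \<times> 'a) set" and len :: "'a \<Rightarrow> 'a \<Rightarrow> real"
    and w :: "'a \<Rightarrow> real" and vt G l :: real and R :: "'a list" and k :: nat
  assumes tree: "weighted_tree V E len"
    and w_nonneg: "\<forall>v\<in>V. w v \<ge> 0"
    and w_sum: "(\<Sum>v\<in>V. w v) = 1"
    and vt_pos: "vt > 0"
    and G_nonneg: "G \<ge> 0"
    and R_path: "is_path V E R"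
    and k_ge: "2 \<le> k" and k_le: "k \<le> length R"
    and same_len: "\<forall>j\<in>{1..length R - k + 1}.
        tdist V E len (hd (subpath R k j)) (last (subpath R k j)) = l"
  shows "\<exists>js\<in>{1..length R - k + 1}.
           (\<forall>j. 1 \<le> j \<and> j < js \<longrightarrow>
              Sbar V E len w vt G (subpath R k j) \<le> Sbar V E len w vt G (subpath R k (j + 1))) \<and>
           (\<forall>j. js \<le> j \<and> j < length R - k + 1 \<longrightarrow>
              Sbar V E len w vt G (subpath R k j) \<ge> Sbar V E len w vt G (subpath R k (j + 1)))"
proof -
  interpret rsetup V E len R using tree R_path by unfold_locales
  show ?thesis using main[OF w_nonneg w_sum vt_pos k_ge k_le same_len] .
qed

end
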